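(* Let $G_\sigma$ denote the exponential distribution with scale $\sigma>0$ (density $\sigma^{-1}e^{-x/\sigma}$ on $(0,\infty)$) and $G=G_1$. Let $\sigma_{\mathrm{test}}>0$ be a random variable, not almost surely constant, having a density with compact support in $(0,\infty)$, such that $\sigma_{\mathrm{test}}$ and $1/\sigma_{\mathrm{test}}$ have the same distribution. Then: (i) the Cramér divergence satisfies $d(G_\sigma,G)=\frac{1+\sigma}{2}-\frac{2\sigma}{1+\sigma}$, and under CRP loss there exists $\sigma^*>1$ with $\mathbb{E}\,\ell(G_{\sigma^*},G_{\sigma_{\mathrm{test}}})<\mathbb{E}\,\ell(G,G_{\sigma_{\mathrm{test}}})$; (ii) the squared $L^2$ divergence satisfies $d(G_\sigma,G)=\frac{(\sigma-1)^2}{2\sigma(\sigma+1)}$, and under quadratic loss there exists $\sigma^*<1$ with $\mathbb{E}\,\ell(G_{\sigma^*},G_{\sigma_{\mathrm{test}}})<\mathbb{E}\,\ell(G,G_{\sigma_{\mathrm{test}}})$.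
   Context: Expected loss $\ell(F,G)=\mathbb{E}\,\ell(F,Y)$, $Y\sim G$; induced divergence $d(F,G)=\ell(F,G)-\ell(G,G)$. $\mathbb{E}\,\ell(F,G_{\sigma_{\mathrm{test}}})$ is the expectation over $\sigma_{\mathrm{test}}$ of $\ell(F,G_{\sigma_{\mathrm{test}}})$. CRP loss: $\ell(F,y)=\int_{\mathbb{R}}(F(x)-\mathbb{I}\{y\le x\})^2dx$, inducing the Cramér divergence $d(F,G)=\int(F-G)^2$ (CDFs). Quadratic loss: $\ell(F,y)=-2f(y)+\int f^2$ ($f$ the density of $F$), inducing $d(F,G)=\int(f-g)^2$. *)

theory Defs
  imports "HOL-Probability.Probability"
begin

definition exp_pdf :: "real \<Rightarrow> real \<Rightarrow> real" where
  "exp_pdf \<sigma> x = (if x > 0 then exp (- x / \<sigma>) / \<sigma> else 0)"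

definition exp_cdf :: "real \<Rightarrow> real \<Rightarrow> real" where
  "exp_cdf \<sigma> x = (if x < 0 then 0 else 1 - exp (- x / \<sigma>))"

definition exp_dist :: "real \<Rightarrow> real measure" where
  "exp_dist \<sigma> = density lborel (\<lambda>x. ennreal (exp_pdf \<sigma> x))"

definition crp_loss :: "(real \<Rightarrow> real) \<Rightarrow> real \<Rightarrow> real" where
  "crp_loss F y = (LINT x|lborel. (F x - (if y \<le> x then 1 else 0))\<^sup>2)"

definition quad_loss :: "(real \<Rightarrow> real) \<Rightarrow> real \<Rightarrow> real" where
  "quad_loss f y = - 2 * f y + (LINT x|lborel. (f x)\<^sup>2)"

definition expected_loss :: "(real \<Rightarrow> real) \<Rightarrow> real measure \<Rightarrow> real" where
  "expected_loss L G = (LINT y|G. L y)"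

definition cramer_div :: "(real \<Rightarrow> real) \<Rightarrow> (real \<Rightarrow> real) \<Rightarrow> real" where
  "cramer_div F G = (LINT x|lborel. (F x - G x)\<^sup>2)"

definition l2_div :: "(real \<Rightarrow> real) \<Rightarrow> (real \<Rightarrow> real) \<Rightarrow> real" where
  "l2_div f g = (LINT x|lborel. (f x - g x)\<^sup>2)"

end

theory Submission
  imports Defs "HOL-Real_Asymp.Real_Asymp"
begin


lemma base_FTC:
  fixes F f :: "real \<Rightarrow> real"
  assumes D: "\<And>x. a < x \<Longrightarrow> DERIV F x :> f x"
    and C: "\<And>x. a < x \<Longrightarrow> isCont f x"
    and N: "\<And>x. a < x \<Longrightarrow> 0 \<le> f x"
    and LA0: "isCont F a" and LB: "(F \<longlongrightarrow> B) at_top"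
  shows "has_bochner_integral lborel (\<lambda>x. indicator {a<..} x *\<^sub>R f x) (B - F a)"
proof -
  define A where "A = F a"
  have LA: "(F \<longlongrightarrow> A) (at_right a)" unfolding A_def
    using LA0 by (metis at_le isCont_def subset_UNIV tendsto_mono)
  have e: "einterval (ereal a) \<infinity> = {a<..}" by (auto simp: einterval_def)
  have A: "((F \<circ> real_of_ereal) \<longlongrightarrow> A) (at_right (ereal a))"
    using LA by (simp add: ereal_tendsto_simps)
  have B: "((F \<circ> real_of_ereal) \<longlongrightarrow> B) (at_left \<infinity>)"
    using LB by (simp add: ereal_tendsto_simps)
  note r = interval_integral_FTC_nonneg[of "ereal a" "\<infinity>" F f A B]
  have "set_integrable lborel (einterval (ereal a) \<infinity>) f"
       "(LBINT x=ereal a..\<infinity>. f x) = B - A"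
    using r D C N A B by auto
  then show ?thesis
    by (simp add: has_bochner_integral_iff set_integrable_def set_lebesgue_integral_def
         interval_lebesgue_integral_def e A_def)
qed

lemma exp_int:
  assumes "(c::real) > 0"
  shows "has_bochner_integral lborel (\<lambda>x. indicator {a<..} x *\<^sub>R exp (- c * x)) (exp (- c * a) / c)"
proof -
  have "has_bochner_integral lborel (\<lambda>x. indicator {a<..} x *\<^sub>R exp (- c * x)) (0 - (- exp (- c * a) / c))"
    apply (rule base_FTC[where F="\<lambda>x. - exp (- c * x) / c"])
    using assms
    subgoal using assms by (auto intro!: derivative_eq_intros simp: field_simps)
    subgoal using assms by (auto intro!: continuous_intros)
    subgoal by simp
    subgoal using assms by (auto intro!: continuous_intros)
    subgoal using assms by real_asymp
    done
  then show ?thesis using assms by simp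
qed

lemma xexp_int:
  assumes "(c::real) > 0"
  shows "has_bochner_integral lborel (\<lambda>x. indicator {0<..} x *\<^sub>R (x * exp (- c * x))) (1 / c^2)"
proof -
  have "has_bochner_integral lborel (\<lambda>x. indicator {0<..} x *\<^sub>R (x * exp (- c * x))) (0 - (- (0 / c + 1 / c^2) * exp (- c * 0)))"
    apply (rule base_FTC[where F="\<lambda>x. - (x / c + 1 / c^2) * exp (- c * x)"])
    using assms
    subgoal using assms by (auto intro!: derivative_eq_intros simp: field_simps power2_eq_square)
    subgoal using assms by (auto intro!: continuous_intros)
    subgoal by simp
    subgoal using assms by (auto intro!: continuous_intros)
    subgoal using assms by real_asymp
    done
  then show ?thesis using assms by simp
qed



lemma cramer:
  assumes s: "(\<sigma>::real) > 0"
  shows "cramer_div (exp_cdf \<sigma>) (exp_cdf 1) = (1 + \<sigma>) / 2 - 2 * \<sigma> / (1 + \<sigma>)"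
proof -
  have p: "0 < 1 + 1/\<sigma>" using s by (simp add: add_pos_nonneg)
  have h: "has_bochner_integral lborel (\<lambda>x. indicator {0<..} x *\<^sub>R exp (- (2/\<sigma>) * x)
       - 2 * (indicator {0<..} x *\<^sub>R exp (- (1 + 1/\<sigma>) * x)) + indicator {0<..} x *\<^sub>R exp (- 2 * x))
     (exp (- (2/\<sigma>) * 0) / (2/\<sigma>) - 2 * (exp (- (1 + 1/\<sigma>) * 0) / (1 + 1/\<sigma>)) + exp (- 2 * 0) / 2)"
    using s p by (intro has_bochner_integral_add has_bochner_integral_diff has_bochner_integral_mult_right exp_int) auto
  have pw: "(exp_cdf \<sigma> x - exp_cdf 1 x)\<^sup>2 = indicator {0<..} x *\<^sub>R exp (- (2/\<sigma>) * x)
       - 2 * (indicator {0<..} x *\<^sub>R exp (- (1 + 1/\<sigma>) * x)) + indicator {0<..} x *\<^sub>R exp (- 2 * x)" for x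
  proof (cases "x > 0")
    case True
    have e1: "exp (- x / \<sigma>) * exp (- x / \<sigma>) = exp (- (2/\<sigma>) * x)"
      by (simp add: mult_exp_exp diff_divide_distrib[symmetric])
    have e2: "exp (- x / \<sigma>) * exp (- x) = exp (- (1 + 1/\<sigma>) * x)"
      by (simp add: mult_exp_exp algebra_simps)
    have e3: "exp (- x) * exp (- x) = exp (- 2 * x)"
      by (simp add: mult_exp_exp)
    have "(exp_cdf \<sigma> x - exp_cdf 1 x)\<^sup>2 = exp (- x / \<sigma>) * exp (- x / \<sigma>) - 2 * (exp (- x / \<sigma>) * exp (- x)) + exp (- x) * exp (- x)"
      using True unfolding exp_cdf_def power2_eq_square by (simp add: algebra_simps)
    then show ?thesis using True e1 e2 e3 by simp
  next
    case False
    then show ?thesis by (cases "x = 0") (auto simp: exp_cdf_def)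
  qed
  have "cramer_div (exp_cdf \<sigma>) (exp_cdf 1) = exp (- (2/\<sigma>) * 0) / (2/\<sigma>) - 2 * (exp (- (1 + 1/\<sigma>) * 0) / (1 + 1/\<sigma>)) + exp (- 2 * 0) / 2"
    unfolding cramer_div_def pw using h by (rule has_bochner_integral_integral_eq)
  also have "\<dots> = (1 + \<sigma>) / 2 - 2 * \<sigma> / (1 + \<sigma>)"
  proof -
    have "1 + 1/\<sigma> = (1 + \<sigma>)/\<sigma>" using s by (simp add: field_simps)
    then show ?thesis using s by simp
  qed
  finally show ?thesis .
qed

lemma l2:
  assumes s: "(\<sigma>::real) > 0"
  shows "l2_div (exp_pdf \<sigma>) (exp_pdf 1) = (\<sigma> - 1)\<^sup>2 / (2 * \<sigma> * (\<sigma> + 1))"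
proof -
  have p: "0 < 1 + 1/\<sigma>" using s by (simp add: add_pos_nonneg)
  have h: "has_bochner_integral lborel (\<lambda>x. (1/\<sigma>^2) * (indicator {0<..} x *\<^sub>R exp (- (2/\<sigma>) * x))
       - (2/\<sigma>) * (indicator {0<..} x *\<^sub>R exp (- (1 + 1/\<sigma>) * x)) + indicator {0<..} x *\<^sub>R exp (- 2 * x))
     ((1/\<sigma>^2) * (exp (- (2/\<sigma>) * 0) / (2/\<sigma>)) - (2/\<sigma>) * (exp (- (1 + 1/\<sigma>) * 0) / (1 + 1/\<sigma>)) + exp (- 2 * 0) / 2)"
    using s p by (intro has_bochner_integral_add has_bochner_integral_diff has_bochner_integral_mult_right exp_int) auto
  have pw: "(exp_pdf \<sigma> x - exp_pdf 1 x)\<^sup>2 = (1/\<sigma>^2) * (indicator {0<..} x *\<^sub>R exp (- (2/\<sigma>) * x))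
       - (2/\<sigma>) * (indicator {0<..} x *\<^sub>R exp (- (1 + 1/\<sigma>) * x)) + indicator {0<..} x *\<^sub>R exp (- 2 * x)" for x
  proof (cases "x > 0")
    case True
    have e1: "exp (- x / \<sigma>) * exp (- x / \<sigma>) = exp (- (2/\<sigma>) * x)"
      by (simp add: mult_exp_exp diff_divide_distrib[symmetric])
    have e2: "exp (- x / \<sigma>) * exp (- x) = exp (- (1 + 1/\<sigma>) * x)"
      by (simp add: mult_exp_exp algebra_simps)
    have e3: "exp (- x) * exp (- x) = exp (- 2 * x)"
      by (simp add: mult_exp_exp)
    have "(exp_pdf \<sigma> x - exp_pdf 1 x)\<^sup>2 = (1/\<sigma>^2) * (exp (- x / \<sigma>) * exp (- x / \<sigma>))
       - (2/\<sigma>) * (exp (- x / \<sigma>) * exp (- x)) + exp (- x) * exp (- x)"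
      using True unfolding exp_pdf_def power2_eq_square by (simp add: algebra_simps)
    then show ?thesis using True e1 e2 e3 by simp
  next
    case False
    then show ?thesis by (auto simp: exp_pdf_def)
  qed
  have "l2_div (exp_pdf \<sigma>) (exp_pdf 1) = (1/\<sigma>^2) * (exp (- (2/\<sigma>) * 0) / (2/\<sigma>)) - (2/\<sigma>) * (exp (- (1 + 1/\<sigma>) * 0) / (1 + 1/\<sigma>)) + exp (- 2 * 0) / 2"
    unfolding l2_div_def pw using h by (rule has_bochner_integral_integral_eq)
  also have "\<dots> = (\<sigma> - 1)\<^sup>2 / (2 * \<sigma> * (\<sigma> + 1))"
  proof -
    have a: "1 + 1/\<sigma> = (1 + \<sigma>)/\<sigma>" using s by (simp add: field_simps)
    have p: "0 < 1 + \<sigma>" using s by simp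
    have "(1/\<sigma>^2) * (exp (- (2/\<sigma>) * 0) / (2/\<sigma>)) - (2/\<sigma>) * (exp (- (1 + 1/\<sigma>) * 0) / (1 + 1/\<sigma>)) + exp (- 2 * 0) / 2
       = 1/(2*\<sigma>) - 2/(1+\<sigma>) + 1/2" unfolding a using s p by (simp add: power2_eq_square)
    also have "\<dots> = (\<sigma> - 1)\<^sup>2 / (2 * \<sigma> * (\<sigma> + 1))"
      using s p by (simp add: divide_simps) (simp add: algebra_simps power2_eq_square)
    finally show ?thesis .
  qed
  finally show ?thesis .
qed



lemma ind_Ioo:
  assumes "(l::real) \<le> u"
  shows "has_bochner_integral lborel (indicator {l<..<u}) (u - l)"
proof -
  have "has_bochner_integral lborel (indicator {l<..<u}) (measure lborel {l<..<u})"
    by (rule has_bochner_integral_real_indicator) (use assms in auto)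
  moreover have "measure lborel {l<..<u} = u - l"
    using assms by (simp add: measure_def)
  ultimately show ?thesis by simp
qed

lemma exp_cdf_meas[measurable]: "exp_cdf s \<in> borel_measurable borel"
  unfolding exp_cdf_def by measurable

lemma exp_pdf_meas[measurable]: "exp_pdf s \<in> borel_measurable borel"
  unfolding exp_pdf_def by measurable

lemma crp_pos:
  assumes s: "(\<sigma>::real) > 0" and y: "y > 0"
  shows "crp_loss (exp_cdf \<sigma>) y = y - 3 * \<sigma> / 2 + 2 * \<sigma> * exp (- y / \<sigma>)"
proof -
  let ?G = "\<lambda>x. indicator {0<..<y} x - 2 * (indicator {0<..} x *\<^sub>R exp (- (1/\<sigma>) * x))
     + 2 * (indicator {y<..} x *\<^sub>R exp (- (1/\<sigma>) * x)) + indicator {0<..} x *\<^sub>R exp (- (2/\<sigma>) * x)"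
  have h: "has_bochner_integral lborel ?G ((y - 0) - 2 * (exp (- (1/\<sigma>) * 0) / (1/\<sigma>))
     + 2 * (exp (- (1/\<sigma>) * y) / (1/\<sigma>)) + exp (- (2/\<sigma>) * 0) / (2/\<sigma>))"
    using s y by (intro has_bochner_integral_add has_bochner_integral_diff has_bochner_integral_mult_right
        exp_int ind_Ioo) auto
  have ae: "AE x in lborel. (exp_cdf \<sigma> x - (if y \<le> x then 1 else 0))\<^sup>2 = ?G x"
    using AE_lborel_singleton[of y]
  proof (rule AE_mp, intro AE_I2 impI)
    fix x :: real assume "x \<noteq> y"
    have e1: "exp (- x / \<sigma>) * exp (- x / \<sigma>) = exp (- (2/\<sigma>) * x)"
      by (simp add: mult_exp_exp diff_divide_distrib[symmetric])
    consider "x < 0" | "x = 0" | "0 < x" "x < y" | "y < x" using \<open>x \<noteq> y\<close> by linarith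
    then show "(exp_cdf \<sigma> x - (if y \<le> x then 1 else 0))\<^sup>2 = ?G x"
    proof cases
      case 1 then show ?thesis using y by (simp add: exp_cdf_def)
    next
      case 2 then show ?thesis using y by (simp add: exp_cdf_def)
    next
      case 3
      then have "(exp_cdf \<sigma> x - (if y \<le> x then 1 else 0))\<^sup>2 = 1 - 2 * exp (- x / \<sigma>) + exp (- x / \<sigma>) * exp (- x / \<sigma>)"
        by (simp add: exp_cdf_def power2_eq_square algebra_simps)
      moreover have "?G x = 1 - 2 * exp (- x / \<sigma>) + exp (- (2/\<sigma>) * x)" using 3 by simp
      ultimately show ?thesis using e1 by simp
    next
      case 4
      then have "(exp_cdf \<sigma> x - (if y \<le> x then 1 else 0))\<^sup>2 = exp (- x / \<sigma>) * exp (- x / \<sigma>)"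
        using y by (simp add: exp_cdf_def power2_eq_square algebra_simps)
      moreover have "?G x = exp (- (2/\<sigma>) * x)" using 4 y by simp
      ultimately show ?thesis using e1 by simp
    qed
  qed
  have "has_bochner_integral lborel (\<lambda>x. (exp_cdf \<sigma> x - (if y \<le> x then 1 else 0))\<^sup>2)
     ((y - 0) - 2 * (exp (- (1/\<sigma>) * 0) / (1/\<sigma>))
     + 2 * (exp (- (1/\<sigma>) * y) / (1/\<sigma>)) + exp (- (2/\<sigma>) * 0) / (2/\<sigma>))"
    using h by (subst has_bochner_integral_cong_AE[OF _ _ ae]) auto
  then have "crp_loss (exp_cdf \<sigma>) y = (y - 0) - 2 * (exp (- (1/\<sigma>) * 0) / (1/\<sigma>))
     + 2 * (exp (- (1/\<sigma>) * y) / (1/\<sigma>)) + exp (- (2/\<sigma>) * 0) / (2/\<sigma>)"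
    unfolding crp_loss_def by (rule has_bochner_integral_integral_eq)
  then show ?thesis using s by simp
qed

lemma crp_nonpos:
  assumes s: "(\<sigma>::real) > 0" and y: "y \<le> 0"
  shows "crp_loss (exp_cdf \<sigma>) y = \<sigma> / 2 - y"
proof -
  let ?G = "\<lambda>x. indicator {y<..<0} x + indicator {0<..} x *\<^sub>R exp (- (2/\<sigma>) * x)"
  have h: "has_bochner_integral lborel ?G ((0 - y) + exp (- (2/\<sigma>) * 0) / (2/\<sigma>))"
    using s y by (intro has_bochner_integral_add exp_int ind_Ioo) auto
  have ae: "AE x in lborel. (exp_cdf \<sigma> x - (if y \<le> x then 1 else 0))\<^sup>2 = ?G x"
    using AE_conjI[OF AE_lborel_singleton[of y] AE_lborel_singleton[of 0]]
  proof (rule AE_mp, intro AE_I2 impI)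
    fix x :: real assume "x \<noteq> y \<and> x \<noteq> 0"
    have e1: "exp (- x / \<sigma>) * exp (- x / \<sigma>) = exp (- (2/\<sigma>) * x)"
      by (simp add: mult_exp_exp diff_divide_distrib[symmetric])
    consider "x < y" | "y < x" "x < 0" | "0 < x" using \<open>x \<noteq> y \<and> x \<noteq> 0\<close> by linarith
    then show "(exp_cdf \<sigma> x - (if y \<le> x then 1 else 0))\<^sup>2 = ?G x"
    proof cases
      case 1 then show ?thesis using y by (simp add: exp_cdf_def)
    next
      case 2 then show ?thesis using y by (simp add: exp_cdf_def)
    next
      case 3
      then have "(exp_cdf \<sigma> x - (if y \<le> x then 1 else 0))\<^sup>2 = exp (- x / \<sigma>) * exp (- x / \<sigma>)"
        using y by (simp add: exp_cdf_def power2_eq_square algebra_simps)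
      moreover have "?G x = exp (- (2/\<sigma>) * x)" using 3 y by simp
      ultimately show ?thesis using e1 by simp
    qed
  qed
  have "has_bochner_integral lborel (\<lambda>x. (exp_cdf \<sigma> x - (if y \<le> x then 1 else 0))\<^sup>2)
     ((0 - y) + exp (- (2/\<sigma>) * 0) / (2/\<sigma>))"
    using h by (subst has_bochner_integral_cong_AE[OF _ _ ae]) auto
  then have "crp_loss (exp_cdf \<sigma>) y = (0 - y) + exp (- (2/\<sigma>) * 0) / (2/\<sigma>)"
    unfolding crp_loss_def by (rule has_bochner_integral_integral_eq)
  then show ?thesis using s by simp
qed

lemma crp_all:
  assumes s: "(\<sigma>::real) > 0"
  shows "crp_loss (exp_cdf \<sigma>) = (\<lambda>y. if y > 0 then y - 3 * \<sigma> / 2 + 2 * \<sigma> * exp (- y / \<sigma>) else \<sigma> / 2 - y)"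
  using crp_pos[OF s] crp_nonpos[OF s] by (auto simp: not_less)




lemma el_pos:
  assumes "(s::real) > 0" and [measurable]: "L \<in> borel_measurable borel"
  shows "expected_loss L (exp_dist s) = (LINT x|lborel. exp_pdf s x *\<^sub>R L x)"
  unfolding expected_loss_def exp_dist_def
  by (rule integral_density) (use assms in \<open>auto simp: exp_pdf_def\<close>)

lemma el_nonpos:
  assumes "(s::real) \<le> 0"
  shows "expected_loss L (exp_dist s) = 0"
proof -
  have z: "ennreal (exp_pdf s x) = 0" for x
  proof -
    have "exp_pdf s x \<le> 0" using assms
      by (auto simp: exp_pdf_def divide_nonneg_nonpos)
    then show ?thesis by (simp add: ennreal_eq_0_iff)
  qed
  have "AE x in exp_dist s. L x = 0"
    unfolding exp_dist_def by (subst AE_density) (auto simp: z)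
  then show ?thesis unfolding expected_loss_def by (rule integral_eq_zero_AE)
qed

lemma crp_exp:
  assumes s: "(s::real) > 0" and sg: "(\<sigma>::real) > 0"
  shows "expected_loss (crp_loss (exp_cdf \<sigma>)) (exp_dist s) = s - 3 * \<sigma> / 2 + 2 * \<sigma>^2 / (\<sigma> + s)"
proof -
  let ?phi = "\<lambda>y. if y > 0 then y - 3 * \<sigma> / 2 + 2 * \<sigma> * exp (- y / \<sigma>) else \<sigma> / 2 - y"
  have m: "?phi \<in> borel_measurable borel" by measurable
  have p: "0 < 1/s + 1/\<sigma>" using s sg by (simp add: add_pos_pos)
  have h: "has_bochner_integral lborel (\<lambda>x. (1/s) * (indicator {0<..} x *\<^sub>R (x * exp (- (1/s) * x)))
      - (3 * \<sigma> / (2 * s)) * (indicator {0<..} x *\<^sub>R exp (- (1/s) * x))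
      + (2 * \<sigma> / s) * (indicator {0<..} x *\<^sub>R exp (- (1/s + 1/\<sigma>) * x)))
     ((1/s) * (1 / (1/s)^2) - (3 * \<sigma> / (2 * s)) * (exp (- (1/s) * 0) / (1/s))
      + (2 * \<sigma> / s) * (exp (- (1/s + 1/\<sigma>) * 0) / (1/s + 1/\<sigma>)))"
    using s sg p by (intro has_bochner_integral_add has_bochner_integral_diff has_bochner_integral_mult_right
        exp_int xexp_int) auto
  have pw: "exp_pdf s x *\<^sub>R ?phi x = (1/s) * (indicator {0<..} x *\<^sub>R (x * exp (- (1/s) * x)))
      - (3 * \<sigma> / (2 * s)) * (indicator {0<..} x *\<^sub>R exp (- (1/s) * x))
      + (2 * \<sigma> / s) * (indicator {0<..} x *\<^sub>R exp (- (1/s + 1/\<sigma>) * x))" for x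
  proof (cases "x > 0")
    case True
    have e: "exp (- x / s) * exp (- x / \<sigma>) = exp (- (1/s + 1/\<sigma>) * x)"
      by (simp add: mult_exp_exp algebra_simps)
    have "exp_pdf s x *\<^sub>R ?phi x = (1/s) * (x * exp (- x / s)) - (3 * \<sigma> / (2 * s)) * exp (- x / s)
       + (2 * \<sigma> / s) * (exp (- x / s) * exp (- x / \<sigma>))"
      using True by (simp add: exp_pdf_def algebra_simps)
    then show ?thesis using True e by simp
  next
    case False
    then show ?thesis by (simp add: exp_pdf_def)
  qed
  have "expected_loss (crp_loss (exp_cdf \<sigma>)) (exp_dist s) = (LINT x|lborel. exp_pdf s x *\<^sub>R ?phi x)"
    unfolding crp_all[OF sg] using s m by (rule el_pos)
  also have "\<dots> = (1/s) * (1 / (1/s)^2) - (3 * \<sigma> / (2 * s)) * (exp (- (1/s) * 0) / (1/s))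
      + (2 * \<sigma> / s) * (exp (- (1/s + 1/\<sigma>) * 0) / (1/s + 1/\<sigma>))"
    unfolding pw using h by (rule has_bochner_integral_integral_eq)
  also have "\<dots> = s - 3 * \<sigma> / 2 + 2 * \<sigma>^2 / (\<sigma> + s)"
  proof -
    have a: "1/s + 1/\<sigma> = (\<sigma> + s) / (s * \<sigma>)" using s sg by (simp add: field_simps)
    show ?thesis unfolding a using s sg by (simp add: power2_eq_square)
  qed
  finally show ?thesis .
qed

lemma pdf_sq:
  assumes sg: "(\<sigma>::real) > 0"
  shows "(LINT x|lborel. (exp_pdf \<sigma> x)\<^sup>2) = 1 / (2 * \<sigma>)"
proof -
  have h: "has_bochner_integral lborel (\<lambda>x. (1/\<sigma>^2) * (indicator {0<..} x *\<^sub>R exp (- (2/\<sigma>) * x)))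
      ((1/\<sigma>^2) * (exp (- (2/\<sigma>) * 0) / (2/\<sigma>)))"
    using sg by (intro has_bochner_integral_mult_right exp_int) auto
  have pw: "(exp_pdf \<sigma> x)\<^sup>2 = (1/\<sigma>^2) * (indicator {0<..} x *\<^sub>R exp (- (2/\<sigma>) * x))" for x
  proof (cases "x > 0")
    case True
    have e1: "exp (- x / \<sigma>) * exp (- x / \<sigma>) = exp (- (2/\<sigma>) * x)"
      by (simp add: mult_exp_exp diff_divide_distrib[symmetric])
    have "(exp_pdf \<sigma> x)\<^sup>2 = (1/\<sigma>^2) * (exp (- x / \<sigma>) * exp (- x / \<sigma>))"
      using True by (simp add: exp_pdf_def power2_eq_square)
    then show ?thesis using True e1 by simp
  next
    case False then show ?thesis by (simp add: exp_pdf_def)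
  qed
  have "(LINT x|lborel. (exp_pdf \<sigma> x)\<^sup>2) = (1/\<sigma>^2) * (exp (- (2/\<sigma>) * 0) / (2/\<sigma>))"
    unfolding pw using h by (rule has_bochner_integral_integral_eq)
  then show ?thesis using sg by (simp add: power2_eq_square)
qed

lemma quad_exp:
  assumes s: "(s::real) > 0" and sg: "(\<sigma>::real) > 0"
  shows "expected_loss (quad_loss (exp_pdf \<sigma>)) (exp_dist s) = 1 / (2 * \<sigma>) - 2 / (\<sigma> + s)"
proof -
  define K where "K = 1 / (2 * \<sigma>)"
  have ql: "quad_loss (exp_pdf \<sigma>) = (\<lambda>y. - 2 * exp_pdf \<sigma> y + K)"
    unfolding quad_loss_def pdf_sq[OF sg] K_def ..
  have m: "(\<lambda>y. - 2 * exp_pdf \<sigma> y + K) \<in> borel_measurable borel" by measurable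
  have p: "0 < 1/s + 1/\<sigma>" using s sg by (simp add: add_pos_pos)
  have h: "has_bochner_integral lborel (\<lambda>x. (-2 / (s * \<sigma>)) * (indicator {0<..} x *\<^sub>R exp (- (1/s + 1/\<sigma>) * x))
      + (K/s) * (indicator {0<..} x *\<^sub>R exp (- (1/s) * x)))
     ((-2 / (s * \<sigma>)) * (exp (- (1/s + 1/\<sigma>) * 0) / (1/s + 1/\<sigma>)) + (K/s) * (exp (- (1/s) * 0) / (1/s)))"
    using s sg p by (intro has_bochner_integral_add has_bochner_integral_mult_right exp_int) auto
  have pw: "exp_pdf s x *\<^sub>R (- 2 * exp_pdf \<sigma> x + K) = (-2 / (s * \<sigma>)) * (indicator {0<..} x *\<^sub>R exp (- (1/s + 1/\<sigma>) * x))
      + (K/s) * (indicator {0<..} x *\<^sub>R exp (- (1/s) * x))" for x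
  proof (cases "x > 0")
    case True
    have e: "exp (- x / s) * exp (- x / \<sigma>) = exp (- (1/s + 1/\<sigma>) * x)"
      by (simp add: mult_exp_exp algebra_simps)
    have "exp_pdf s x *\<^sub>R (- 2 * exp_pdf \<sigma> x + K) = (-2 / (s * \<sigma>)) * (exp (- x / s) * exp (- x / \<sigma>))
       + (K/s) * exp (- x / s)"
      using True by (simp add: exp_pdf_def algebra_simps)
    then show ?thesis using True e by simp
  next
    case False
    then show ?thesis by (simp add: exp_pdf_def)
  qed
  have "expected_loss (quad_loss (exp_pdf \<sigma>)) (exp_dist s) = (LINT x|lborel. exp_pdf s x *\<^sub>R (- 2 * exp_pdf \<sigma> x + K))"
    unfolding ql using s m by (rule el_pos)
  also have "\<dots> = (-2 / (s * \<sigma>)) * (exp (- (1/s + 1/\<sigma>) * 0) / (1/s + 1/\<sigma>)) + (K/s) * (exp (- (1/s) * 0) / (1/s))"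
    unfolding pw using h by (rule has_bochner_integral_integral_eq)
  also have "\<dots> = 1 / (2 * \<sigma>) - 2 / (\<sigma> + s)"
  proof -
    have a: "1/s + 1/\<sigma> = (\<sigma> + s) / (s * \<sigma>)" using s sg by (simp add: field_simps)
    show ?thesis unfolding a K_def using s sg by simp
  qed
  finally show ?thesis .
qed




lemma crp_bound:
  fixes s \<sigma> :: real
  assumes s: "s > 0" and sg: "\<sigma> \<ge> 1"
  shows "(s - 3 * \<sigma> / 2 + 2 * \<sigma>^2 / (\<sigma> + s)) - (s - 3 * 1 / 2 + 2 * 1^2 / (1 + s))
     \<le> (\<sigma> - 1) * (1/2 - (2 * s^2 / (1 + s)^2) / \<sigma>)"
proof -
  have p1: "0 < 1 + s" "0 < \<sigma> + s" "0 < \<sigma>" using s sg by auto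
  have eq: "(s - 3 * \<sigma> / 2 + 2 * \<sigma>^2 / (\<sigma> + s)) - (s - 3 * 1 / 2 + 2 * 1^2 / (1 + s))
     = (\<sigma> - 1) * (1/2 - 2 * s^2 / ((1 + s) * (\<sigma> + s)))"
    using p1 by (simp add: divide_simps) (simp add: algebra_simps power2_eq_square)
  have a1: "s \<le> \<sigma> * s" using s sg by simp
  have a2: "s * s \<le> \<sigma> * (s * s)" using mult_right_mono[of 1 "\<sigma>" "s * s"] sg by simp
  have w: "(1 + s) * (\<sigma> + s) \<le> (1 + s)^2 * \<sigma>"
    using a1 a2 by (simp add: power2_eq_square algebra_simps)
  have "(2 * s^2 / (1 + s)^2) / \<sigma> = 2 * s^2 / ((1 + s)^2 * \<sigma>)" by simp
  also have "\<dots> \<le> 2 * s^2 / ((1 + s) * (\<sigma> + s))"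
    by (rule frac_le) (use p1 w in auto)
  finally have "1/2 - 2 * s^2 / ((1 + s) * (\<sigma> + s)) \<le> 1/2 - (2 * s^2 / (1 + s)^2) / \<sigma>" by simp
  then show ?thesis unfolding eq using sg by (intro mult_left_mono) auto
qed

lemma quad_bound:
  fixes s \<sigma> :: real
  assumes s: "s > 0" and sg: "0 < \<sigma>" "\<sigma> \<le> 1"
  shows "(1 / (2 * \<sigma>) - 2 / (\<sigma> + s)) - (1 / (2 * 1) - 2 / (1 + s))
     \<le> (1 - \<sigma>) * (1 / (2 * \<sigma>) - 2 / (1 + s)^2)"
proof -
  have p1: "0 < 1 + s" "0 < \<sigma> + s" using s sg by auto
  have eq: "(1 / (2 * \<sigma>) - 2 / (\<sigma> + s)) - (1 / (2 * 1) - 2 / (1 + s))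
     = (1 - \<sigma>) * (1 / (2 * \<sigma>) - 2 / ((1 + s) * (\<sigma> + s)))"
    using p1 sg by (simp add: divide_simps) (simp add: algebra_simps)
  have w: "(1 + s) * (\<sigma> + s) \<le> (1 + s)^2"
    using p1 sg by (simp add: power2_eq_square)
  have "2 / (1 + s)^2 \<le> 2 / ((1 + s) * (\<sigma> + s))"
    by (rule divide_left_mono) (use p1 w in auto)
  then have "1 / (2 * \<sigma>) - 2 / ((1 + s) * (\<sigma> + s)) \<le> 1 / (2 * \<sigma>) - 2 / (1 + s)^2" by simp
  then show ?thesis unfolding eq using sg by (intro mult_left_mono) auto
qed

lemma uv_pt:
  fixes x :: real assumes "x > 0"
  shows "2 * x^2 / (1 + x)^2 = 2 / (1 + 1 / x)^2"
proof -
  have "1 + 1 / x = (1 + x) / x" using assms by (simp add: field_simps)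
  then show ?thesis using assms by (simp add: power_divide)
qed

lemma sum_pt:
  fixes x :: real assumes "x > 0"
  shows "2 * x^2 / (1 + x)^2 + 2 / (1 + x)^2 = 1 + (1 - x)^2 / (1 + x)^2"
proof -
  have "(1 + x)^2 \<noteq> 0" using assms by simp
  then show ?thesis by (simp add: divide_simps) (simp add: algebra_simps power2_eq_square)
qed

lemma intX:
  fixes g :: "real \<Rightarrow> real"
  assumes fm: "finite_measure M" and Xm[measurable]: "X \<in> borel_measurable M"
    and ae: "AE \<omega> in M. X \<omega> \<in> {a..b}"
    and gm[measurable]: "g \<in> borel_measurable borel" and gc: "continuous_on {a..b} g"
  shows "integrable M (\<lambda>\<omega>. g (X \<omega>))"
proof -
  have "compact (g ` {a..b})" by (rule compact_continuous_image) (use gc in auto)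
  then obtain B where B: "\<forall>y\<in>g`{a..b}. norm y \<le> B"
    using compact_imp_bounded bounded_iff by metis
  show ?thesis
  proof (rule finite_measure.integrable_const_bound[OF fm, where B=B])
    show "AE \<omega> in M. norm (g (X \<omega>)) \<le> B" using ae by eventually_elim (use B in auto)
    show "(\<lambda>\<omega>. g (X \<omega>)) \<in> borel_measurable M" by measurable
  qed
qed

theorem mainTheorem9:
  fixes M :: "'a measure" and X :: "'a \<Rightarrow> real" and h :: "real \<Rightarrow> ennreal"
  assumes "prob_space M"
    and "distributed M lborel X h"
    and "\<exists>a b. 0 < a \<and> a \<le> b \<and> (\<forall>x. x \<notin> {a..b} \<longrightarrow> h x = 0)"
    and "\<not> (\<exists>c. AE \<omega> in M. X \<omega> = c)"
    and "distr M lborel (\<lambda>\<omega>. 1 / X \<omega>) = distr M lborel X"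
  shows "(\<forall>\<sigma>>0. cramer_div (exp_cdf \<sigma>) (exp_cdf 1) = (1 + \<sigma>) / 2 - 2 * \<sigma> / (1 + \<sigma>))
       \<and> (\<exists>\<sigma>s>1. (LINT \<omega>|M. expected_loss (crp_loss (exp_cdf \<sigma>s)) (exp_dist (X \<omega>)))
                 < (LINT \<omega>|M. expected_loss (crp_loss (exp_cdf 1)) (exp_dist (X \<omega>))))
       \<and> (\<forall>\<sigma>>0. l2_div (exp_pdf \<sigma>) (exp_pdf 1) = (\<sigma> - 1)\<^sup>2 / (2 * \<sigma> * (\<sigma> + 1)))
       \<and> (\<exists>\<sigma>s. 0 < \<sigma>s \<and> \<sigma>s < 1 \<and>
              (LINT \<omega>|M. expected_loss (quad_loss (exp_pdf \<sigma>s)) (exp_dist (X \<omega>)))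
                 < (LINT \<omega>|M. expected_loss (quad_loss (exp_pdf 1)) (exp_dist (X \<omega>))))"
proof -
  interpret P: prob_space M by fact
  have fm: "finite_measure M" by unfold_locales
  have Xl: "X \<in> measurable M lborel" using distributed_measurable[OF assms(2)] .
  then have Xm[measurable]: "X \<in> borel_measurable M" by simp
  obtain a b where ab: "0 < a" "a \<le> b" "\<And>x. x \<notin> {a..b} \<Longrightarrow> h x = 0" using assms(3) by blast
  have hm[measurable]: "h \<in> borel_measurable lborel" using distributed_borel_measurable[OF assms(2)] .
  have AEX: "AE \<omega> in M. X \<omega> \<in> {a..b}"
  proof -
    have "AE x in lborel. 0 < h x \<longrightarrow> x \<in> {a..b}" using ab(3) by (intro AE_I2) force
    then show ?thesis by (subst P.distributed_AE2[OF assms(2)]) auto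
  qed
  have AEpos: "AE \<omega> in M. X \<omega> > 0" using AEX by eventually_elim (use ab in auto)
  define u where "u = (\<lambda>x::real. 2 * x^2 / (1 + x)^2)"
  define v where "v = (\<lambda>x::real. 2 / (1 + x)^2)"
  define w where "w = (\<lambda>x::real. (1 - x)^2 / (1 + x)^2)"
  have um[measurable]: "u \<in> borel_measurable borel" unfolding u_def by measurable
  have vm[measurable]: "v \<in> borel_measurable borel" unfolding v_def by measurable
  have wm[measurable]: "w \<in> borel_measurable borel" unfolding w_def by measurable
  have ne: "\<And>x. x \<in> {a..b} \<Longrightarrow> 1 + x \<noteq> 0" using ab by auto
  have ui: "integrable M (\<lambda>\<omega>. u (X \<omega>))"
    by (rule intX[OF fm Xm AEX um]) (unfold u_def, use ne in \<open>auto intro!: continuous_intros\<close>)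
  have vi: "integrable M (\<lambda>\<omega>. v (X \<omega>))"
    by (rule intX[OF fm Xm AEX vm]) (unfold v_def, use ne in \<open>auto intro!: continuous_intros\<close>)
  have wi: "integrable M (\<lambda>\<omega>. w (X \<omega>))"
    by (rule intX[OF fm Xm AEX wm]) (unfold w_def, use ne in \<open>auto intro!: continuous_intros\<close>)
  have sym: "(LINT \<omega>|M. g (1 / X \<omega>)) = (LINT \<omega>|M. g (X \<omega>))" if [measurable]: "g \<in> borel_measurable borel" for g :: "real \<Rightarrow> real"
  proof -
    have "(\<lambda>\<omega>. 1 / X \<omega>) \<in> borel_measurable M" by measurable
    then have ivm: "(\<lambda>\<omega>. 1 / X \<omega>) \<in> measurable M lborel" by simp
    have "(LINT \<omega>|M. g (1 / X \<omega>)) = (LINT y|distr M lborel (\<lambda>\<omega>. 1 / X \<omega>). g y)"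
      by (rule integral_distr[symmetric, OF ivm]) simp
    also have "\<dots> = (LINT y|distr M lborel X. g y)" unfolding assms(5) ..
    also have "\<dots> = (LINT \<omega>|M. g (X \<omega>))" by (rule integral_distr[OF Xl]) simp
    finally show ?thesis .
  qed
  define c where "c = (LINT \<omega>|M. v (X \<omega>))"
  have uv: "(LINT \<omega>|M. u (X \<omega>)) = c"
  proof -
    have "(LINT \<omega>|M. u (X \<omega>)) = (LINT \<omega>|M. v (1 / X \<omega>))"
    proof (rule integral_cong_AE)
      show "AE \<omega> in M. u (X \<omega>) = v (1 / X \<omega>)"
        using AEpos by eventually_elim (simp add: u_def v_def uv_pt)
    qed auto
    then show ?thesis unfolding c_def using sym[OF vm] by simp
  qed
  have sum: "(LINT \<omega>|M. u (X \<omega>)) + (LINT \<omega>|M. v (X \<omega>)) = 1 + (LINT \<omega>|M. w (X \<omega>))"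
  proof -
    have "(LINT \<omega>|M. u (X \<omega>)) + (LINT \<omega>|M. v (X \<omega>)) = (LINT \<omega>|M. u (X \<omega>) + v (X \<omega>))"
      using ui vi by simp
    also have "\<dots> = (LINT \<omega>|M. 1 + w (X \<omega>))"
    proof (rule integral_cong_AE)
      show "AE \<omega> in M. u (X \<omega>) + v (X \<omega>) = 1 + w (X \<omega>)"
        using AEpos
      proof eventually_elim
        case (elim \<omega>)
        then show ?case unfolding u_def v_def w_def by (rule sum_pt)
      qed
    qed auto
    also have "\<dots> = 1 + (LINT \<omega>|M. w (X \<omega>))" using wi by (simp add: P.prob_space)
    finally show ?thesis .
  qed
  have wpos: "(LINT \<omega>|M. w (X \<omega>)) > 0"
  proof -
    have nn: "AE \<omega> in M. 0 \<le> w (X \<omega>)" by (intro AE_I2) (simp add: w_def)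
    have "(LINT \<omega>|M. w (X \<omega>)) \<noteq> 0"
    proof
      assume "(LINT \<omega>|M. w (X \<omega>)) = 0"
      then have "AE \<omega> in M. w (X \<omega>) = 0" using integral_nonneg_eq_0_iff_AE[OF wi nn] by simp
      then have "AE \<omega> in M. X \<omega> = 1" using AEpos
      proof eventually_elim
        case (elim \<omega>)
        then have "(1 - X \<omega>)^2 = 0" unfolding w_def by simp
        then show ?case by simp
      qed
      then show False using assms(4) by blast
    qed
    moreover have "(LINT \<omega>|M. w (X \<omega>)) \<ge> 0" using nn by (rule integral_nonneg_AE)
    ultimately show ?thesis by simp
  qed
  have c: "c > 1/2" using sum uv wpos unfolding c_def by simp
  define Phi where "Phi = (\<lambda>\<sigma> s::real. s - 3 * \<sigma> / 2 + 2 * \<sigma>^2 / (\<sigma> + s))"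
  have crpI: "(LINT \<omega>|M. expected_loss (crp_loss (exp_cdf \<sigma>)) (exp_dist (X \<omega>))) = (LINT \<omega>|M. Phi \<sigma> (X \<omega>))"
    and crpi: "integrable M (\<lambda>\<omega>. Phi \<sigma> (X \<omega>))" if sg: "\<sigma> > 0" for \<sigma>
  proof -
    have Lm[measurable]: "Phi \<sigma> \<in> borel_measurable borel" unfolding Phi_def by measurable
    have pw: "expected_loss (crp_loss (exp_cdf \<sigma>)) (exp_dist y) = (if y > 0 then Phi \<sigma> y else 0)" for y
    proof (cases "y > 0")
      case True then show ?thesis using crp_exp[OF True sg] unfolding Phi_def by simp
    next
      case False then show ?thesis using el_nonpos[of y] by simp
    qed
    have "(LINT \<omega>|M. expected_loss (crp_loss (exp_cdf \<sigma>)) (exp_dist (X \<omega>))) = (LINT \<omega>|M. (if X \<omega> > 0 then Phi \<sigma> (X \<omega>) else 0))"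
      unfolding pw ..
    also have "\<dots> = (LINT \<omega>|M. Phi \<sigma> (X \<omega>))"
    proof (rule integral_cong_AE)
      show "AE \<omega> in M. (if X \<omega> > 0 then Phi \<sigma> (X \<omega>) else 0) = Phi \<sigma> (X \<omega>)"
        using AEpos by eventually_elim simp
    qed measurable
    finally show "(LINT \<omega>|M. expected_loss (crp_loss (exp_cdf \<sigma>)) (exp_dist (X \<omega>))) = (LINT \<omega>|M. Phi \<sigma> (X \<omega>))" .
    show "integrable M (\<lambda>\<omega>. Phi \<sigma> (X \<omega>))"
    proof (rule intX[OF fm Xm AEX])
      show "Phi \<sigma> \<in> borel_measurable borel" by (rule Lm)
      have "\<And>x. x \<in> {a..b} \<Longrightarrow> \<sigma> + x \<noteq> 0" using ab sg by auto
      then show "continuous_on {a..b} (Phi \<sigma>)" unfolding Phi_def by (auto intro!: continuous_intros)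
    qed
  qed
  define ss where "ss = c + 1/2"
  have ss1: "ss > 1" using c unfolding ss_def by simp
  have crp_lt: "(LINT \<omega>|M. Phi ss (X \<omega>)) < (LINT \<omega>|M. Phi 1 (X \<omega>))"
  proof -
    have "(LINT \<omega>|M. Phi ss (X \<omega>)) - (LINT \<omega>|M. Phi 1 (X \<omega>)) = (LINT \<omega>|M. Phi ss (X \<omega>) - Phi 1 (X \<omega>))"
      using crpi[of ss] crpi[of 1] ss1 by simp
    also have "\<dots> \<le> (LINT \<omega>|M. (ss - 1) * (1/2 - u (X \<omega>) / ss))"
    proof (rule integral_mono_AE)
      show "integrable M (\<lambda>\<omega>. Phi ss (X \<omega>) - Phi 1 (X \<omega>))" using crpi[of ss] crpi[of 1] ss1 by simp
      show "integrable M (\<lambda>\<omega>. (ss - 1) * (1/2 - u (X \<omega>) / ss))" using ui by simp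
      show "AE \<omega> in M. Phi ss (X \<omega>) - Phi 1 (X \<omega>) \<le> (ss - 1) * (1/2 - u (X \<omega>) / ss)"
        using AEpos
      proof eventually_elim
        case (elim \<omega>)
        show ?case unfolding Phi_def u_def by (rule crp_bound) (use elim ss1 in auto)
      qed
    qed
    also have "\<dots> = (ss - 1) * (1/2 - c / ss)"
      using ui uv by (simp add: P.prob_space)
    also have "\<dots> < 0"
    proof -
      have "1/2 * ss < c" using c unfolding ss_def by simp
      then have "c / ss > 1/2" using ss1 by (simp add: less_divide_eq)
      then show ?thesis using ss1 by (simp add: mult_pos_neg)
    qed
    finally show ?thesis by simp
  qed
  define Q where "Q = (\<lambda>\<sigma> s::real. 1 / (2 * \<sigma>) - 2 / (\<sigma> + s))"
  have qI: "(LINT \<omega>|M. expected_loss (quad_loss (exp_pdf \<sigma>)) (exp_dist (X \<omega>))) = (LINT \<omega>|M. Q \<sigma> (X \<omega>))"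
    and qi: "integrable M (\<lambda>\<omega>. Q \<sigma> (X \<omega>))" if sg: "\<sigma> > 0" for \<sigma>
  proof -
    have Lm[measurable]: "Q \<sigma> \<in> borel_measurable borel" unfolding Q_def by measurable
    have pw: "expected_loss (quad_loss (exp_pdf \<sigma>)) (exp_dist y) = (if y > 0 then Q \<sigma> y else 0)" for y
    proof (cases "y > 0")
      case True then show ?thesis using quad_exp[OF True sg] unfolding Q_def by simp
    next
      case False then show ?thesis using el_nonpos[of y] by simp
    qed
    have "(LINT \<omega>|M. expected_loss (quad_loss (exp_pdf \<sigma>)) (exp_dist (X \<omega>))) = (LINT \<omega>|M. (if X \<omega> > 0 then Q \<sigma> (X \<omega>) else 0))"
      unfolding pw ..
    also have "\<dots> = (LINT \<omega>|M. Q \<sigma> (X \<omega>))"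
    proof (rule integral_cong_AE)
      show "AE \<omega> in M. (if X \<omega> > 0 then Q \<sigma> (X \<omega>) else 0) = Q \<sigma> (X \<omega>)"
        using AEpos by eventually_elim simp
    qed measurable
    finally show "(LINT \<omega>|M. expected_loss (quad_loss (exp_pdf \<sigma>)) (exp_dist (X \<omega>))) = (LINT \<omega>|M. Q \<sigma> (X \<omega>))" .
    show "integrable M (\<lambda>\<omega>. Q \<sigma> (X \<omega>))"
    proof (rule intX[OF fm Xm AEX])
      show "Q \<sigma> \<in> borel_measurable borel" by (rule Lm)
      have "\<And>x. x \<in> {a..b} \<Longrightarrow> \<sigma> + x \<noteq> 0" using ab sg by auto
      then show "continuous_on {a..b} (Q \<sigma>)" unfolding Q_def by (auto intro!: continuous_intros)
    qed
  qed
  define sq where "sq = (1 + 1 / (2 * c)) / 2"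
  have cpos: "c > 0" using c by simp
  have sqr: "1 / (2 * c) < 1" using c by (simp add: field_simps)
  have sqp: "0 < 1 / (2 * c)" using cpos by simp
  have sq0: "0 < sq" "sq < 1" using sqr sqp unfolding sq_def by (simp_all add: field_simps)
  have sqc: "1 / (2 * sq) < c"
  proof -
    have "1 / (2 * c) < sq" using sqr unfolding sq_def by simp
    then have "1 < 2 * c * sq" using cpos by (simp add: field_simps)
    then show ?thesis using sq0 cpos by (simp add: field_simps)
  qed
  have q_lt: "(LINT \<omega>|M. Q sq (X \<omega>)) < (LINT \<omega>|M. Q 1 (X \<omega>))"
  proof -
    have "(LINT \<omega>|M. Q sq (X \<omega>)) - (LINT \<omega>|M. Q 1 (X \<omega>)) = (LINT \<omega>|M. Q sq (X \<omega>) - Q 1 (X \<omega>))"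
      using qi[of sq] qi[of 1] sq0 by simp
    also have "\<dots> \<le> (LINT \<omega>|M. (1 - sq) * (1 / (2 * sq) - v (X \<omega>)))"
    proof (rule integral_mono_AE)
      show "integrable M (\<lambda>\<omega>. Q sq (X \<omega>) - Q 1 (X \<omega>))" using qi[of sq] qi[of 1] sq0 by simp
      show "integrable M (\<lambda>\<omega>. (1 - sq) * (1 / (2 * sq) - v (X \<omega>)))" using vi by simp
      show "AE \<omega> in M. Q sq (X \<omega>) - Q 1 (X \<omega>) \<le> (1 - sq) * (1 / (2 * sq) - v (X \<omega>))"
        using AEpos
      proof eventually_elim
        case (elim \<omega>)
        show ?case unfolding Q_def v_def by (rule quad_bound) (use elim sq0 in auto)
      qed
    qed
    also have "\<dots> = (1 - sq) * (1 / (2 * sq) - c)"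
      using vi by (simp add: P.prob_space c_def)
    also have "\<dots> < 0"
      using sq0 sqc by (simp add: mult_pos_neg)
    finally show ?thesis by simp
  qed
  show ?thesis
  proof (intro conjI allI impI)
    show "cramer_div (exp_cdf \<sigma>) (exp_cdf 1) = (1 + \<sigma>) / 2 - 2 * \<sigma> / (1 + \<sigma>)" if "\<sigma> > 0" for \<sigma>
      using cramer[OF that] .
    show "l2_div (exp_pdf \<sigma>) (exp_pdf 1) = (\<sigma> - 1)\<^sup>2 / (2 * \<sigma> * (\<sigma> + 1))" if "\<sigma> > 0" for \<sigma>
      using l2[OF that] .
    show "\<exists>\<sigma>s>1. (LINT \<omega>|M. expected_loss (crp_loss (exp_cdf \<sigma>s)) (exp_dist (X \<omega>)))
                 < (LINT \<omega>|M. expected_loss (crp_loss (exp_cdf 1)) (exp_dist (X \<omega>)))"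
      using crp_lt ss1 crpI[of ss] crpI[of 1] by (intro exI[of _ ss]) auto
    show "\<exists>\<sigma>s. 0 < \<sigma>s \<and> \<sigma>s < 1 \<and>
              (LINT \<omega>|M. expected_loss (quad_loss (exp_pdf \<sigma>s)) (exp_dist (X \<omega>)))
                 < (LINT \<omega>|M. expected_loss (quad_loss (exp_pdf 1)) (exp_dist (X \<omega>)))"
      using q_lt sq0 qI[of sq] qI[of 1] by (intro exI[of _ sq]) auto
  qed
qed


end
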